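(* Let $\nu\ge 0$ and $K>\nu+1$, and let $\Psi_\nu(x)=I_{\nu+1}(x)/I_\nu(x)$ for $x>0$. Then the equation $$r-\Psi_\nu(2Kr)=0$$ has a positive real solution $r$.
   Context: $I_\nu$ denotes the modified Bessel function of the first kind of order $\nu$. *)

theory Defs
  imports "HOL-Analysis.Analysis"
begin

definition besselI :: "real \<Rightarrow> real \<Rightarrow> real" where
  "besselI \<nu> x = (\<Sum>k. (x / 2) powr (2 * real k + \<nu>) / (fact k * Gamma (real k + \<nu> + 1)))"

definition besselPsi :: "real \<Rightarrow> real \<Rightarrow> real" where
  "besselPsi \<nu> x = besselI (\<nu> + 1) x / besselI \<nu> x"

end

theory Submission
  imports Defs
begin

lemma Gp1: "(z::real) > 0 \<Longrightarrow> Gamma (z + 1) = z * Gamma z"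
  by (rule Gamma_plus1) (auto dest: nonpos_Ints_nonpos)

definition aa :: "real \<Rightarrow> nat \<Rightarrow> real" where
  "aa v k = 1 / (fact k * Gamma (real k + v + 1))"

definition FF :: "real \<Rightarrow> real \<Rightarrow> real" where
  "FF v y = (\<Sum>k. aa v k * y ^ k)"

lemma Gamma_ge: assumes "v \<ge> 0" shows "Gamma (v + 1) \<le> Gamma (real k + v + 1)"
proof (induction k)
  case 0 then show ?case by simp
next
  case (Suc k)
  have "Gamma (real (Suc k) + v + 1) = (real k + v + 1) * Gamma (real k + v + 1)"
    using Gp1[of "real k + v + 1"] assms by (simp add: algebra_simps)
  moreover have "Gamma (real k + v + 1) > 0" using assms by simp
  ultimately show ?case using Suc assms
    by (smt (verit, ccfv_SIG) mult_le_cancel_right1 of_nat_0_le_iff)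
qed

lemma aa_pos: "v \<ge> 0 \<Longrightarrow> aa v k > 0"
  unfolding aa_def by simp

lemma aa_le: assumes "v \<ge> 0" shows "aa v k \<le> 1 / (Gamma (v + 1) * fact k)"
proof -
  have "Gamma (v+1) > 0" using assms by simp
  then show ?thesis unfolding aa_def using Gamma_ge[OF assms, of k]
    by (intro divide_left_mono) (auto simp: mult.commute intro!: mult_left_mono)
qed

lemma summ: assumes "v \<ge> 0" shows "summable (\<lambda>k. aa v k * y ^ k)"
proof (rule summable_comparison_test')
  have "summable (\<lambda>k. \<bar>y\<bar> ^ k /\<^sub>R fact k)" using exp_converges sums_summable by blast
  then show "summable (\<lambda>k. (1 / Gamma (v+1)) * (\<bar>y\<bar> ^ k /\<^sub>R fact k))"
    by (rule summable_mult)
  fix k :: nat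
  have "norm (aa v k * y ^ k) = aa v k * \<bar>y\<bar> ^ k"
    using aa_pos[OF assms, of k] by (simp add: abs_mult power_abs)
  also have "\<dots> \<le> 1 / (Gamma (v + 1) * fact k) * \<bar>y\<bar> ^ k"
    by (intro mult_right_mono aa_le assms) simp
  finally show "norm (aa v k * y ^ k) \<le> (1 / Gamma (v+1)) * (\<bar>y\<bar> ^ k /\<^sub>R fact k)"
    by (simp add: field_simps)
qed

lemma FF_exp: assumes "v \<ge> 0" "y \<ge> 0" shows "FF v y \<le> exp y / Gamma (v+1)"
proof -
  have s: "(\<lambda>k. (1 / Gamma (v+1)) * (y ^ k /\<^sub>R fact k)) sums ((1 / Gamma (v+1)) * exp y)"
    by (rule sums_mult) (rule exp_converges)
  have "FF v y \<le> (1 / Gamma (v+1)) * exp y"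
    unfolding FF_def
  proof (rule sums_le[OF _ summable_sums[OF summ[OF assms(1)]] s])
    fix k
    have "aa v k * y ^ k \<le> 1 / (Gamma (v + 1) * fact k) * y ^ k"
      by (intro mult_right_mono aa_le assms) (simp add: assms)
    then show "aa v k * y ^ k \<le> (1 / Gamma (v+1)) * (y ^ k /\<^sub>R fact k)"
      by (simp add: field_simps)
  qed
  then show ?thesis by simp
qed

lemma FF_ge: assumes "v \<ge> 0" "y \<ge> 0" shows "aa v 0 \<le> FF v y"
proof -
  have "sum (\<lambda>k. aa v k * y ^ k) {0} \<le> FF v y" unfolding FF_def
    by (rule sum_le_suminf[OF summ[OF assms(1)]]) (auto intro!: mult_nonneg_nonneg zero_le_power simp: less_imp_le[OF aa_pos[OF assms(1)]] assms)
  then show ?thesis by simp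
qed

lemma FF_pos: "v \<ge> 0 \<Longrightarrow> y \<ge> 0 \<Longrightarrow> FF v y > 0"
  using FF_ge aa_pos by (meson less_le_trans)

lemma FF_cont: "v \<ge> 0 \<Longrightarrow> isCont (FF v) y"
  unfolding FF_def[abs_def] by (rule isCont_powser_converges_everywhere) (rule summ)

lemma besselI_eq: assumes "v \<ge> 0" "x > 0"
  shows "besselI v x = (x/2) powr v * FF v ((x/2)^2)"
proof -
  have "besselI v x = (\<Sum>k. (x/2) powr v * (aa v k * ((x/2)^2)^k))"
    unfolding besselI_def
  proof (rule suminf_cong)
    fix k
    have e: "(x/2) powr (real (2*k)) = (x/2)^(2*k)" using powr_realpow[of "x/2" "2*k"] assms by simp
    have "(x/2) powr (2 * real k + v) = (x/2) powr v * ((x/2)^2)^k"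
      using assms e by (simp add: powr_add power_mult[symmetric] mult.commute)
    then show "(x / 2) powr (2 * real k + v) / (fact k * Gamma (real k + v + 1)) =
       (x/2) powr v * (aa v k * ((x/2)^2)^k)" by (simp add: aa_def)
  qed
  also have "\<dots> = (x/2) powr v * FF v ((x/2)^2)"
    unfolding FF_def by (rule suminf_mult[OF summ[OF assms(1)]])
  finally show ?thesis .
qed

lemma Psi_eq: assumes "v \<ge> 0" "x > 0"
  shows "besselPsi v x = (x/2) * FF (v+1) ((x/2)^2) / FF v ((x/2)^2)"
proof -
  have "(x/2) powr (v+1) = (x/2) powr v * (x/2)" using assms by (simp add: powr_add)
  moreover have "(x/2) powr v > 0" using assms by simp
  moreover have "FF v ((x/2)^2) > 0" using FF_pos assms by simp
  ultimately show ?thesis unfolding besselPsi_def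
    using besselI_eq[OF assms] besselI_eq[of "v+1" x] assms by (simp add: field_simps)
qed

lemma term_bound:
  fixes P s m j :: real
  assumes "P \<ge> 0" "s > 0" "m \<ge> j" "j \<ge> 1"
  shows "P * s / m \<le> P + P * s * s / (j * m)"
proof (cases "s \<le> m")
  case True
  then have "P * s / m \<le> P" using assms
    by (simp add: divide_le_eq mult_left_mono)
  moreover have "P * s * s / (j * m) \<ge> 0" using assms by simp
  ultimately show ?thesis by linarith
next
  case False
  have m0: "m > 0" using assms by simp
  have c0: "P * s / m \<ge> 0" using assms m0 by simp
  have "s / j \<ge> 1" using assms False by (simp add: le_divide_eq)
  then have "P * s / m * 1 \<le> P * s / m * (s / j)" using c0 by (intro mult_left_mono) auto
  also have "\<dots> = P * s * s / (j * m)" by (simp add: mult.commute)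
  finally show ?thesis using assms by simp
qed

lemma upper: assumes "v \<ge> 0" "s > 0"
  shows "s * FF (v+1) (s^2) \<le> 2 * FF v (s^2)"
proof -
  let ?y = "s^2"
  let ?A = "\<lambda>k. aa v k * ?y ^ k"
  have sA: "summable ?A" by (rule summ[OF assms(1)])
  have sA1: "summable (\<lambda>k. ?A (Suc k))" by (subst summable_Suc_iff) (rule sA)
  have "s * FF (v+1) ?y = (\<Sum>k. s * (aa (v+1) k * ?y ^ k))"
    unfolding FF_def by (rule suminf_mult[symmetric]) (rule summ, use assms in simp)
  also have "\<dots> \<le> (\<Sum>k. ?A k + ?A (Suc k))"
  proof (rule suminf_le)
    fix k
    define G where "G = Gamma (real k + v + 1)"
    define m where "m = real k + v + 1"
    define P where "P = ?y ^ k / (fact k * G)"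
    have G: "G > 0" unfolding G_def using assms by simp
    have G1: "Gamma (real k + (v + 1) + 1) = m * G"
      unfolding G_def m_def using Gp1[of "real k + v + 1"] assms by (simp add: algebra_simps)
    have G2: "Gamma (real (Suc k) + v + 1) = m * G"
      using G1 by (simp add: algebra_simps)
    have P: "P \<ge> 0" unfolding P_def using G by simp
    have "s * (aa (v+1) k * ?y ^ k) = P * s / m"
      unfolding aa_def P_def G1 by (simp add: field_simps)
    also have "\<dots> \<le> P + P * s * s / (real (Suc k) * m)"
      by (rule term_bound) (use P assms m_def in auto)
    also have "\<dots> = ?A k + ?A (Suc k)"
      unfolding aa_def P_def G2 using G by (simp add: G_def field_simps power2_eq_square)
    finally show "s * (aa (v+1) k * ?y ^ k) \<le> ?A k + ?A (Suc k)" .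
  next
    show "summable (\<lambda>k. s * (aa (v + 1) k * ?y ^ k))"
      by (rule summable_mult) (rule summ, use assms in simp)
    show "summable (\<lambda>k. ?A k + ?A (Suc k))" using sA sA1 by (rule summable_add)
  qed
  also have "\<dots> = FF v ?y + (FF v ?y - ?A 0)"
    unfolding FF_def using suminf_add[OF sA sA1] suminf_split_head[OF sA] by simp
  also have "\<dots> \<le> 2 * FF v ?y" using aa_pos[OF assms(1), of 0] by simp
  finally show ?thesis .
qed

theorem mainTheorem3:
  fixes \<nu> K :: real
  assumes "\<nu> \<ge> 0" and "K > \<nu> + 1"
  shows "\<exists>r::real. r > 0 \<and> r - besselPsi \<nu> (2 * K * r) = 0"
proof -
  have K0: "K > 0" using assms by simp
  define g where "g r = r - K * r * FF (\<nu>+1) ((K*r)^2) / FF \<nu> ((K*r)^2)" for r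
  have geq: "besselPsi \<nu> (2 * K * r) = K * r * FF (\<nu>+1) ((K*r)^2) / FF \<nu> ((K*r)^2)" if "r > 0" for r
    using Psi_eq[OF assms(1), of "2*K*r"] that K0 by simp
  define y0 where "y0 = ln (K / (\<nu>+1)) / 2"
  have q: "K / (\<nu>+1) > 1" using assms by simp
  have y0: "y0 > 0" unfolding y0_def using q by simp
  have ey: "exp y0 < K / (\<nu>+1)"
  proof -
    have "exp (2*y0) = K / (\<nu>+1)" unfolding y0_def using q by simp
    moreover have "exp y0 < exp (2*y0)" using y0 by simp
    ultimately show ?thesis by simp
  qed
  define a where "a = sqrt y0 / K"
  have a0: "a > 0" unfolding a_def using y0 K0 by simp
  have Ka: "(K*a)^2 = y0" unfolding a_def using K0 y0 by simp
  have Gp: "Gamma (\<nu>+1) > 0" using assms by simp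
  have "FF \<nu> y0 \<le> exp y0 / Gamma (\<nu>+1)" using FF_exp assms y0 by simp
  also have "\<dots> < K / (\<nu>+1) / Gamma (\<nu>+1)" using divide_strict_right_mono[OF ey Gp] by simp
  also have "\<dots> = K * aa (\<nu>+1) 0"
    unfolding aa_def using Gp1[of "\<nu>+1"] assms by (simp add: field_simps)
  also have "\<dots> \<le> K * FF (\<nu>+1) y0" using FF_ge[of "\<nu>+1" y0] assms y0 K0 by simp
  finally have lo: "FF \<nu> y0 < K * FF (\<nu>+1) y0" .
  have F0: "FF \<nu> y0 > 0" using FF_pos assms y0 by simp
  have "g a < 0"
  proof -
    have "1 < K * FF (\<nu>+1) y0 / FF \<nu> y0" using lo F0 by simp
    then have "a * 1 < a * (K * FF (\<nu>+1) y0 / FF \<nu> y0)" using a0 by (intro mult_strict_left_mono) auto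
    then show ?thesis unfolding g_def Ka by (simp add: field_simps)
  qed
  define b where "b = a + 3"
  have "g b > 0"
  proof -
    have b0: "b > 0" unfolding b_def using a0 by simp
    have u: "(K*b) * FF (\<nu>+1) ((K*b)^2) \<le> 2 * FF \<nu> ((K*b)^2)"
      using upper[OF assms(1), of "K*b"] K0 b0 by simp
    have p: "FF \<nu> ((K*b)^2) > 0" using FF_pos assms by simp
    have "K * b * FF (\<nu>+1) ((K*b)^2) / FF \<nu> ((K*b)^2) \<le> 2"
      using u p by (simp add: divide_le_eq)
    then show ?thesis unfolding g_def b_def using a0 by simp
  qed
  have cont: "continuous_on {a..b} g"
  proof (rule continuous_at_imp_continuous_on, intro ballI)
    fix r assume r: "r \<in> {a..b}"
    have "FF \<nu> ((K*r)^2) \<noteq> 0" using FF_pos[of \<nu> "(K*r)^2"] assms by simp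
    moreover have "isCont (\<lambda>r. FF \<nu> ((K*r)^2)) r"
      by (rule isCont_o2[OF _ FF_cont[OF assms(1)]]) simp
    moreover have "isCont (\<lambda>r. FF (\<nu>+1) ((K*r)^2)) r"
      by (rule isCont_o2[OF _ FF_cont]) (use assms in simp_all)
    ultimately show "isCont g r" unfolding g_def[abs_def]
      by (intro continuous_intros) auto
  qed
  obtain r where r: "a \<le> r" "r \<le> b" "g r = 0"
    using IVT'[of g a 0 b] \<open>g a < 0\<close> \<open>g b > 0\<close> cont b_def by force
  have "r > 0" using r a0 by simp
  then show ?thesis using r geq unfolding g_def by (intro exI[of _ r]) simp
qed

end
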